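(* For every $v\in\mathbb Q$, the following are equivalent: (1) $v\in\mathcal V$; (2) $v\in\mathbb Z_{d,\ell}$, $v\geq-\mu_\kappa$, and $v\in\mathcal V_{\iota(v)}$ where $\iota(v)=\left\lfloor (n+1)\frac{v+\mu_\kappa}{\tau}+h(v)\right\rfloor$.
   Context: Let $\mathbf K$ be a field and $\ell\geq 2$ an integer. Let $L=a_n\phi_\ell^n+\dots+a_0$ with $n\geq1$, $a_i\in\mathbf K[z]$, $a_0a_n\neq0$, where $\phi_\ell(f)(z)=f(z^\ell)$ acting on Hahn series with coefficients in $\mathbf K$ and value group $\mathbb Q$. Let $\mathcal P(L)=\{(\ell^i,j): 0\le i\le n,\ j\in\operatorname{supp} a_i\}$. The Newton polygon of $L$ is the convex hull of $\{(\ell^i,j): 0\le i\le n,\ j\geq\operatorname{val} a_i\}\subset\mathbb R^2$; its non-vertical edges have slopes $\mu_1<\dots<\mu_\kappa$, $\mathcal S(L)=\{\mu_1,\dots,\mu_\kappa\}$. Let $d\geq1$ be a common multiple of the denominators of the $\mu_k$; $\mathbb Z_{d,\ell}=\bigcup_{i\geq0}\frac{1}{d\ell^i}\mathbb Z$, and $h(v)=\min\{i\geq0: v\in\frac1{d\ell^i}\mathbb Z\}$ for $v\in\mathbb Z_{d,\ell}$. Define $\Psi(v)=\{v\ell^i+j:(\ell^i,j)\in\mathcal P(L)\}$, $\pi(q)=\max\{(q-j)/\ell^i:(\ell^i,j)\in\mathcal P(L)\}$. Let $\mathcal V_0=-\mathcal S(L)$, $\mathcal V_{i+1}=\bigcup_{v\in\mathcal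 V_i}\pi(\Psi(v))$, $\mathcal V=\bigcup_{i\ge0}\mathcal V_i$ (a well-ordered set). For $v\in\mathbb Q$ let $\epsilon(v)=\min\{w\in\mathcal V: w>v\}-v\in\mathbb Q_{>0}\cup\{+\infty\}$ ($+\infty$ if this set is empty), and $\tau=\min\{\epsilon(-\mu_1),\dots,\epsilon(-\mu_\kappa),(d\ell^n)^{-1}\}\in\mathbb Q_{>0}$. *)

theory Defs
  imports "HOL-Analysis.Analysis" "HOL-Computational_Algebra.Polynomial"
begin

text \<open>The operator L = a_n phi^n + ... + a_0 is represented by the coefficient
  function a (only a 0, ..., a n matter), with a i :: K[z].\<close>

definition pval :: "'a::zero poly \<Rightarrow> nat" where
  "pval p = (LEAST j. coeff p j \<noteq> 0)"

definition suppP :: "nat \<Rightarrow> nat \<Rightarrow> (nat \<Rightarrow> 'a::zero poly) \<Rightarrow> (nat \<times> nat) set" where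
  "suppP l n a = {(l ^ i, j) | i j. i \<le> n \<and> coeff (a i) j \<noteq> 0}"

text \<open>Newton polygon: convex hull of {(l^i, j) : 0 <= i <= n, j >= val a_i} in R^2
  (no points for a_i = 0, whose valuation is +infinity).\<close>
definition newton_polygon :: "nat \<Rightarrow> nat \<Rightarrow> (nat \<Rightarrow> 'a::zero poly) \<Rightarrow> (real \<times> real) set" where
  "newton_polygon l n a =
     convex hull {(real (l ^ i), y) | i y. i \<le> n \<and> a i \<noteq> 0 \<and> y \<ge> real (pval (a i))}"

text \<open>S(L): slopes of the non-vertical edges of the Newton polygon. A non-vertical
  edge is the (at least two-point) intersection of the polygon with a non-vertical
  supporting line y = mu x + c below which the polygon does not go.
  (Such slopes are rational since the vertices are integer points.)\<close>
definition slopes :: "nat \<Rightarrow> nat \<Rightarrow> (nat \<Rightarrow> 'a::zero poly) \<Rightarrow> rat set" where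
  "slopes l n a = {\<mu>. \<exists>c::real.
      (\<forall>p\<in>newton_polygon l n a. snd p \<ge> of_rat \<mu> * fst p + c) \<and>
      (\<exists>p q. p \<in> newton_polygon l n a \<and> q \<in> newton_polygon l n a \<and> p \<noteq> q \<and>
             snd p = of_rat \<mu> * fst p + c \<and> snd q = of_rat \<mu> * fst q + c)}"

definition Psi :: "nat \<Rightarrow> nat \<Rightarrow> (nat \<Rightarrow> 'a::zero poly) \<Rightarrow> rat \<Rightarrow> rat set" where
  "Psi l n a v = {v * of_nat x + of_nat j | x j. (x, j) \<in> suppP l n a}"

definition piL :: "nat \<Rightarrow> nat \<Rightarrow> (nat \<Rightarrow> 'a::zero poly) \<Rightarrow> rat \<Rightarrow> rat" where
  "piL l n a q = Max {(q - of_nat j) / of_nat x | x j. (x, j) \<in> suppP l n a}"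

primrec Vseq :: "nat \<Rightarrow> nat \<Rightarrow> (nat \<Rightarrow> 'a::zero poly) \<Rightarrow> nat \<Rightarrow> rat set" where
  "Vseq l n a 0 = uminus ` slopes l n a"
| "Vseq l n a (Suc i) = (\<Union>v\<in>Vseq l n a i. piL l n a ` Psi l n a v)"

definition Vall :: "nat \<Rightarrow> nat \<Rightarrow> (nat \<Rightarrow> 'a::zero poly) \<Rightarrow> rat set" where
  "Vall l n a = (\<Union>i. Vseq l n a i)"

text \<open>epsilon(v): None encodes +infinity.\<close>
definition eps :: "nat \<Rightarrow> nat \<Rightarrow> (nat \<Rightarrow> 'a::zero poly) \<Rightarrow> rat \<Rightarrow> rat option" where
  "eps l n a v = (if \<exists>w\<in>Vall l n a. w > v
                  then Some ((LEAST w. w \<in> Vall l n a \<and> w > v) - v) else None)"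

definition tau :: "nat \<Rightarrow> nat \<Rightarrow> (nat \<Rightarrow> 'a::zero poly) \<Rightarrow> nat \<Rightarrow> rat" where
  "tau l n a d = Min ({1 / of_nat (d * l ^ n)} \<union>
                      {e. \<exists>\<mu>\<in>slopes l n a. eps l n a (- \<mu>) = Some e})"

definition Zdl :: "nat \<Rightarrow> nat \<Rightarrow> rat set" where
  "Zdl d l = {v. \<exists>i k. v = of_int k / of_nat (d * l ^ i)}"

definition hgt :: "nat \<Rightarrow> nat \<Rightarrow> rat \<Rightarrow> nat" where
  "hgt d l v = (LEAST i. \<exists>k::int. v = of_int k / of_nat (d * l ^ i))"

definition iota :: "nat \<Rightarrow> nat \<Rightarrow> (nat \<Rightarrow> 'a::zero poly) \<Rightarrow> nat \<Rightarrow> rat \<Rightarrow> nat" where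
  "iota l n a d v = nat \<lfloor>(of_nat n + 1) * (v + Max (slopes l n a)) / tau l n a d
                          + of_nat (hgt d l v)\<rfloor>"

end

theory Submission
  imports Defs
begin


lemma set_img_eq1: "{(q - of_nat j) / of_nat x | x j. ((x::nat), (j::nat)) \<in> PP} = (\<lambda>p. (q - of_nat (snd p)) / of_nat (fst p)::rat) ` PP"
  unfolding image_def apply auto apply (rule_tac x="(xa,j)" in bexI) apply auto done
lemma set_img_eq2: "{v * of_nat x + of_nat j | x j. ((x::nat), (j::nat)) \<in> PP} = (\<lambda>p. v * of_nat (fst p) + of_nat (snd p)::rat) ` PP"
  unfolding image_def apply auto apply (rule_tac x="(xa,j)" in bexI) apply auto done

locale mth =
  fixes a :: "nat \<Rightarrow> 'a::field poly" and l n :: nat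
  assumes l2: "l \<ge> 2" and n1: "n \<ge> 1" and a0: "a 0 \<noteq> 0" and an: "a n \<noteq> 0"
begin

abbreviation "P \<equiv> suppP l n a"

definition vl :: "rat \<Rightarrow> nat \<times> nat \<Rightarrow> rat" where
  "vl v p = v * of_nat (fst p) + of_nat (snd p)"

definition minz :: "rat \<Rightarrow> nat \<times> nat \<Rightarrow> bool" where
  "minz v p \<longleftrightarrow> p \<in> P \<and> (\<forall>q\<in>P. vl v p \<le> vl v q)"

definition F :: "rat \<Rightarrow> rat" where "F v = Min (vl v ` P)"

definition g :: "nat \<times> nat \<Rightarrow> rat \<Rightarrow> rat" where "g p u = piL l n a (vl u p)"

lemma l_pos: "l > 0" using l2 by auto

lemma P_iff: "(x, j) \<in> P \<longleftrightarrow> (\<exists>i\<le>n. x = l ^ i \<and> coeff (a i) j \<noteq> 0)"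
  unfolding suppP_def by auto

lemma P_x: "p \<in> P \<Longrightarrow> \<exists>i\<le>n. fst p = l ^ i"
  by (cases p) (auto simp: P_iff)

lemma P_x_ge1: "p \<in> P \<Longrightarrow> fst p \<ge> 1"
  using P_x l_pos by fastforce

lemma finP: "finite P"
proof -
  define M where "M = Max ((\<lambda>i. degree (a i)) ` {..n})"
  have "P \<subseteq> ((\<lambda>i. l ^ i) ` {..n}) \<times> {..M}"
  proof
    fix p assume "p \<in> P"
    then obtain i j where p: "p = (l ^ i, j)" "i \<le> n" "coeff (a i) j \<noteq> 0"
      by (cases p) (auto simp: P_iff)
    have "j \<le> degree (a i)" using p(3) le_degree by blast
    also have "\<dots> \<le> M" unfolding M_def using p(2) by (intro Max_ge) auto
    finally show "p \<in> ((\<lambda>i. l ^ i) ` {..n}) \<times> {..M}" using p by auto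
  qed
  thus ?thesis by (rule finite_subset) auto
qed

lemma pval_coeff: "b \<noteq> 0 \<Longrightarrow> coeff b (pval b) \<noteq> 0"
  unfolding pval_def by (rule LeastI_ex) (metis leading_coeff_neq_0)

lemma pval_le: "coeff b j \<noteq> 0 \<Longrightarrow> pval b \<le> j"
  unfolding pval_def by (rule Least_le)

lemma P0: "(1, pval (a 0)) \<in> P"
  using pval_coeff[OF a0] by (auto simp: P_iff intro!: exI[of _ 0])

lemma Pn: "(l ^ n, pval (a n)) \<in> P"
  using pval_coeff[OF an] by (auto simp: P_iff)

lemma Pne: "P \<noteq> {}" using P0 by auto

lemma F_le: "p \<in> P \<Longrightarrow> F v \<le> vl v p"
  unfolding F_def using finP by (auto intro: Min_le)

lemma ex_minz: "\<exists>p. minz v p"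
proof -
  have "F v \<in> vl v ` P" unfolding F_def using finP Pne by (intro Min_in) auto
  then obtain p where "p \<in> P" "F v = vl v p" by auto
  thus ?thesis using F_le unfolding minz_def by metis
qed

lemma F_in: "F v \<in> vl v ` P"
  unfolding F_def using finP Pne by (intro Min_in) auto

lemma minz_F: "minz v p \<Longrightarrow> F v = vl v p"
proof -
  assume m: "minz v p"
  obtain q where q: "q \<in> P" "F v = vl v q" using F_in[of v] by (meson imageE)
  show ?thesis using m q F_le unfolding minz_def by (metis antisym)
qed

lemma vl_strict: "p \<in> P \<Longrightarrow> v < v' \<Longrightarrow> vl v p < vl v' p"
proof -
  assume "p \<in> P" "v < v'"
  hence "of_nat (fst p) \<ge> (1::rat)" using P_x_ge1 by auto
  hence "v * of_nat (fst p) < v' * of_nat (fst p)" using \<open>v < v'\<close> by auto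
  thus ?thesis unfolding vl_def by simp
qed

lemma F_strict: "v < v' \<Longrightarrow> F v < F v'"
proof -
  assume "v < v'"
  obtain p where p: "minz v' p" using ex_minz by blast
  hence "p \<in> P" unfolding minz_def by auto
  have "F v \<le> vl v p" using F_le \<open>p \<in> P\<close> by auto
  also have "\<dots> < vl v' p" using vl_strict \<open>p \<in> P\<close> \<open>v < v'\<close> by auto
  finally show ?thesis using minz_F p by simp
qed

lemma F_mono_iff: "F v \<le> F v' \<longleftrightarrow> v \<le> v'"
proof
  assume "F v \<le> F v'"
  show "v \<le> v'"
  proof (rule ccontr)
    assume "\<not> v \<le> v'"
    hence "F v' < F v" using F_strict by simp
    thus False using \<open>F v \<le> F v'\<close> by simp
  qed
next
  assume "v \<le> v'"
  thus "F v \<le> F v'" using F_strict[of v v'] by (cases "v = v'") auto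
qed

lemma F_inj: "F v = F v' \<Longrightarrow> v = v'"
  using F_mono_iff[of v v'] F_mono_iff[of v' v] by simp

lemma piL_F: "F (piL l n a q) = q"
proof -
  define S where "S = {(q - of_nat j) / of_nat x | x j. (x, j) \<in> P}"
  have S_eq: "S = (\<lambda>p. (q - of_nat (snd p)) / of_nat (fst p)) ` P"
    unfolding S_def by (rule set_img_eq1)
  have finS: "finite S" using finP unfolding S_eq by simp
  have neS: "S \<noteq> {}" using Pne unfolding S_eq by simp
  define w where "w = Max S"
  have pw: "piL l n a q = w" unfolding w_def piL_def S_def by simp
  have "w \<in> S" unfolding w_def using finS neS by (rule Max_in)
  then obtain p0 where p0: "p0 \<in> P" "w = (q - of_nat (snd p0)) / of_nat (fst p0)"
    unfolding S_eq by blast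
  have x0: "(of_nat (fst p0)::rat) > 0" using P_x_ge1[OF p0(1)] by auto
  have "vl w p0 = q" using p0(2) x0 unfolding vl_def by simp
  hence le1: "F w \<le> q" using F_le[OF p0(1)] by auto
  have "\<forall>p\<in>P. q \<le> vl w p"
  proof
    fix p assume "p \<in> P"
    have "(q - of_nat (snd p)) / of_nat (fst p) \<le> w"
      unfolding w_def using finS \<open>p \<in> P\<close> unfolding S_eq by (intro Max_ge) auto
    moreover have "(of_nat (fst p)::rat) > 0" using P_x_ge1[OF \<open>p \<in> P\<close>] by auto
    ultimately show "q \<le> vl w p" unfolding vl_def by (simp add: pos_divide_le_eq)
  qed
  moreover obtain pm where pm: "minz w pm" using ex_minz by blast
  ultimately have "q \<le> F w" using minz_F[OF pm] pm unfolding minz_def by simp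
  thus ?thesis using le1 pw by simp
qed

lemma piL_eq: "F w = q \<Longrightarrow> piL l n a q = w"
proof -
  assume "F w = q"
  hence "F (piL l n a q) = F w" using piL_F by simp
  thus ?thesis by (rule F_inj)
qed

lemma F_g: "F (g p u) = vl u p"
  unfolding g_def by (rule piL_F)

lemma g_ge: "p \<in> P \<Longrightarrow> u \<le> g p u"
proof -
  assume "p \<in> P"
  hence "F u \<le> F (g p u)" using F_g F_le by simp
  thus ?thesis using F_mono_iff by blast
qed

lemma vl_mono: "p \<in> P \<Longrightarrow> v \<le> v' \<Longrightarrow> vl v p \<le> vl v' p"
  using vl_strict[of p v v'] by (cases "v = v'") auto

lemma g_mono: "p \<in> P \<Longrightarrow> u \<le> u' \<Longrightarrow> g p u \<le> g p u'"
proof -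
  assume "p \<in> P" "u \<le> u'"
  hence "F (g p u) \<le> F (g p u')" using F_g vl_mono by simp
  thus ?thesis using F_mono_iff by blast
qed

lemma g_minz: "minz u p \<Longrightarrow> g p u = u"
proof -
  assume "minz u p"
  hence "F (g p u) = F u" using F_g minz_F by simp
  thus ?thesis by (rule F_inj)
qed

lemma Psi_eq: "Psi l n a v = vl v ` P"
  unfolding Psi_def vl_def by (rule set_img_eq2)

lemma Vseq_Suc: "w \<in> Vseq l n a (Suc k) \<longleftrightarrow> (\<exists>u\<in>Vseq l n a k. \<exists>p\<in>P. w = g p u)"
  by (simp add: Psi_eq g_def image_iff)

lemma Vseq_mono1: "Vseq l n a k \<subseteq> Vseq l n a (Suc k)"
proof
  fix u assume "u \<in> Vseq l n a k"
  obtain p where "minz u p" using ex_minz by blast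
  hence "g p u = u" "p \<in> P" using g_minz minz_def by auto
  thus "u \<in> Vseq l n a (Suc k)" unfolding Vseq_Suc using \<open>u \<in> _\<close> by metis
qed

lemma Vseq_mono: "k \<le> m \<Longrightarrow> Vseq l n a k \<subseteq> Vseq l n a m"
proof (induction m rule: dec_induct)
  case (step m)
  then show ?case using Vseq_mono1 by blast
qed simp

end


context mth begin

definition Br :: "rat set" where
  "Br = {v. \<exists>p q. minz v p \<and> minz v q \<and> p \<noteq> q}"

lemma l_gt1: "l > 1" using l2 by auto

lemma pow_inj: "l ^ i = l ^ k \<Longrightarrow> i = k"
  using l_gt1 by (simp add: power_inject_exp)

lemma P_pt: "i \<le> n \<Longrightarrow> a i \<noteq> 0 \<Longrightarrow> (l ^ i, pval (a i)) \<in> P"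
  using pval_coeff by (auto simp: P_iff)

lemma P_ge_pval: "(l ^ i, j) \<in> P \<Longrightarrow> a i \<noteq> 0 \<and> i \<le> n \<and> pval (a i) \<le> j"
proof -
  assume "(l ^ i, j) \<in> P"
  then obtain k where k: "k \<le> n" "l ^ i = l ^ k" "coeff (a k) j \<noteq> 0" by (auto simp: P_iff)
  have "k = i" using pow_inj k(2) by simp
  thus ?thesis using k pval_le by fastforce
qed

lemma of_rat_vl: "of_rat (vl v p) = of_rat v * real (fst p) + real (snd p)"
  unfolding vl_def by (simp add: of_rat_add of_rat_mult)

definition G where "G = {(real (l ^ i), y) | i y. i \<le> n \<and> a i \<noteq> 0 \<and> y \<ge> real (pval (a i))}"

lemma NP_eq: "newton_polygon l n a = convex hull G"
  unfolding newton_polygon_def G_def by simp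

lemma P_in_G: "p \<in> P \<Longrightarrow> (real (fst p), real (snd p)) \<in> G"
proof -
  assume "p \<in> P"
  then obtain i where i: "i \<le> n" "fst p = l ^ i" using P_x by blast
  hence "(l ^ i, snd p) \<in> P" using \<open>p \<in> P\<close> by (metis prod.collapse)
  from P_ge_pval[OF this] show ?thesis unfolding G_def using i by auto
qed

lemma slopes_imp_Br: "\<mu> \<in> slopes l n a \<Longrightarrow> - \<mu> \<in> Br"
proof -
  assume "\<mu> \<in> slopes l n a"
  then obtain c :: real where
    below: "\<forall>pt\<in>convex hull G. snd pt \<ge> of_rat \<mu> * fst pt + c" and
    two: "\<exists>p q. p \<in> convex hull G \<and> q \<in> convex hull G \<and> p \<noteq> q \<and>
             snd p = of_rat \<mu> * fst p + c \<and> snd q = of_rat \<mu> * fst q + c"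
    unfolding slopes_def NP_eq by blast
  define m where "m = (of_rat \<mu> :: real)"
  have GH: "s \<in> G \<Longrightarrow> snd s \<ge> m * fst s + c" for s
    using below hull_subset[of G convex] m_def by blast
  show ?thesis
  proof (rule ccontr)
    assume nB: "- \<mu> \<notin> Br"
    obtain z where z: "minz (-\<mu>) z" using ex_minz by blast
    define Z where "Z = (real (fst z), real (snd z))"
    have onl: "s = Z" if s: "s \<in> G" "snd s = m * fst s + c" for s
    proof -
      obtain i y where iy: "s = (real (l ^ i), y)" "i \<le> n" "a i \<noteq> 0" "y \<ge> real (pval (a i))"
        using s(1) unfolding G_def by blast
      define r where "r = (l ^ i, pval (a i))"
      have rP: "r \<in> P" unfolding r_def using P_pt iy by auto
      have "real (pval (a i)) \<ge> m * real (l ^ i) + c"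
        using GH[OF P_in_G[OF rP]] unfolding r_def by simp
      hence yeq: "y = real (pval (a i))" and ceq: "c = real (pval (a i)) - m * real (l^i)"
        using s(2) iy by auto
      have "minz (-\<mu>) r"
        unfolding minz_def
      proof (intro conjI rP ballI)
        fix r' assume "r' \<in> P"
        have "real (snd r') \<ge> m * real (fst r') + c" using GH[OF P_in_G[OF \<open>r' \<in> P\<close>]] by simp
        hence "of_rat (vl (-\<mu>) r) \<le> (of_rat (vl (-\<mu>) r') :: real)"
          unfolding of_rat_vl r_def using ceq m_def by (simp add: of_rat_minus)
        thus "vl (-\<mu>) r \<le> vl (-\<mu>) r'" by (simp add: of_rat_less_eq)
      qed
      hence "z = r" using z nB unfolding Br_def by blast
      thus ?thesis unfolding Z_def iy(1) using yeq by (simp add: r_def)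
    qed
    have allZ: "pt = Z" if pt: "pt \<in> convex hull G" "snd pt = m * fst pt + c" for pt
    proof -
      obtain S u where S: "finite S" "S \<subseteq> G" "\<forall>x\<in>S. 0 \<le> u x" "sum u S = 1"
          "(\<Sum>v\<in>S. u v *\<^sub>R v) = pt"
        using pt(1) unfolding convex_hull_explicit by blast
      have fpt: "fst pt = (\<Sum>v\<in>S. u v * fst v)" using S(5)[symmetric] by (simp add: fst_sum)
      have spt: "snd pt = (\<Sum>v\<in>S. u v * snd v)" using S(5)[symmetric] by (simp add: snd_sum)
      have "(\<Sum>v\<in>S. u v * (snd v - m * fst v - c)) =
            (\<Sum>v\<in>S. u v * snd v) - m * (\<Sum>v\<in>S. u v * fst v) - c * sum u S"
        by (simp add: algebra_simps sum_subtractf sum_distrib_left sum.distrib)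
      also have "\<dots> = 0" using fpt spt S(4) pt(2) by simp
      finally have s0: "(\<Sum>v\<in>S. u v * (snd v - m * fst v - c)) = 0" .
      have nn: "\<forall>v\<in>S. 0 \<le> u v * (snd v - m * fst v - c)"
      proof
        fix v assume "v \<in> S"
        hence "v \<in> G" using S(2) by blast
        hence "snd v - m * fst v - c \<ge> 0" using GH[OF \<open>v \<in> G\<close>] by simp
        thus "0 \<le> u v * (snd v - m * fst v - c)" using S(3) \<open>v \<in> S\<close> by simp
      qed
      have iff: "(\<Sum>v\<in>S. u v * (snd v - m * fst v - c)) = 0 \<longleftrightarrow>
                 (\<forall>v\<in>S. u v * (snd v - m * fst v - c) = 0)"
        by (rule sum_nonneg_eq_0_iff[OF S(1)]) (use nn in blast)
      have each: "\<forall>v\<in>S. u v * (snd v - m * fst v - c) = 0"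
        using iff s0 by blast
      have "(\<Sum>v\<in>S. u v *\<^sub>R v) = (\<Sum>v\<in>S. u v *\<^sub>R Z)"
      proof (rule sum.cong)
        fix v assume "v \<in> S"
        show "u v *\<^sub>R v = u v *\<^sub>R Z"
        proof (cases "u v = 0")
          case False
          hence "snd v = m * fst v + c" using each \<open>v \<in> S\<close> by auto
          moreover have "v \<in> G" using S(2) \<open>v \<in> S\<close> by blast
          ultimately have "v = Z" using onl by blast
          thus ?thesis by simp
        qed simp
      qed simp
      also have "\<dots> = Z" using S(4) by (simp add: scaleR_sum_left[symmetric])
      finally show ?thesis using S(5) by simp
    qed
    from two obtain p q where "p \<in> convex hull G" "q \<in> convex hull G" "p \<noteq> q"
      "snd p = m * fst p + c" "snd q = m * fst q + c" unfolding m_def by blast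
    thus False using allZ by metis
  qed
qed

lemma Br_imp_slopes: "- \<mu> \<in> Br \<Longrightarrow> \<mu> \<in> slopes l n a"
proof -
  assume "- \<mu> \<in> Br"
  then obtain p q where pq: "minz (-\<mu>) p" "minz (-\<mu>) q" "p \<noteq> q" unfolding Br_def by blast
  define m where "m = (of_rat \<mu> :: real)"
  define c where "c = (of_rat (F (-\<mu>)) :: real)"
  define H where "H = {pt::real\<times>real. m * fst pt + c \<le> snd pt}"
  have H_eq: "H = {x. inner (-m, 1::real) x \<ge> c}"
    unfolding H_def by (auto simp: inner_prod_def)
  have cH: "convex H" unfolding H_eq by (rule convex_halfspace_ge)
  have GH: "G \<subseteq> H"
  proof
    fix s assume "s \<in> G"
    then obtain i y where iy: "s = (real (l ^ i), y)" "i \<le> n" "a i \<noteq> 0" "y \<ge> real (pval (a i))"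
      unfolding G_def by blast
    define r where "r = (l ^ i, pval (a i))"
    have rP: "r \<in> P" unfolding r_def using P_pt iy by auto
    have "F (-\<mu>) \<le> vl (-\<mu>) r" using F_le[OF rP] .
    hence "c \<le> of_rat (vl (-\<mu>) r)" unfolding c_def by (simp add: of_rat_less_eq)
    hence "c \<le> - m * real (l ^ i) + real (pval (a i))"
      unfolding of_rat_vl r_def m_def by (simp add: of_rat_minus)
    thus "s \<in> H" unfolding H_def using iy by auto
  qed
  have below: "\<forall>pt\<in>newton_polygon l n a. snd pt \<ge> of_rat \<mu> * fst pt + c"
    using hull_minimal[of G H convex, OF GH cH] unfolding NP_eq H_def m_def by blast
  have online: "snd (real (fst r), real (snd r)) = of_rat \<mu> * fst (real (fst r), real (snd r)) + c"
    if "minz (-\<mu>) r" for r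
  proof -
    have "F (-\<mu>) = vl (-\<mu>) r" using minz_F[OF that] .
    hence "c = of_rat (vl (-\<mu>) r)" unfolding c_def by simp
    thus ?thesis unfolding of_rat_vl by (simp add: of_rat_minus)
  qed
  have inNP: "(real (fst r), real (snd r)) \<in> newton_polygon l n a" if "minz (-\<mu>) r" for r
    unfolding NP_eq using P_in_G that hull_subset[of G convex] unfolding minz_def by blast
  have neq: "(real (fst p), real (snd p)) \<noteq> (real (fst q), real (snd q))"
    using pq(3) by (simp add: prod_eq_iff)
  show ?thesis unfolding slopes_def
    using below online[OF pq(1)] online[OF pq(2)] inNP[OF pq(1)] inNP[OF pq(2)] neq by blast
qed

lemma slopes_iff: "\<mu> \<in> slopes l n a \<longleftrightarrow> - \<mu> \<in> Br"
  using slopes_imp_Br Br_imp_slopes by blast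

lemma Vseq0: "Vseq l n a 0 = Br"
proof -
  have "uminus ` slopes l n a = Br"
  proof
    show "uminus ` slopes l n a \<subseteq> Br" using slopes_imp_Br by blast
    show "Br \<subseteq> uminus ` slopes l n a"
    proof
      fix v assume "v \<in> Br"
      hence "- v \<in> slopes l n a" using Br_imp_slopes[of "-v"] by simp
      thus "v \<in> uminus ` slopes l n a" by (metis image_eqI minus_minus)
    qed
  qed
  thus ?thesis by simp
qed

lemma minz_same_x: "minz v p \<Longrightarrow> minz v q \<Longrightarrow> fst p = fst q \<Longrightarrow> p = q"
proof -
  assume m: "minz v p" "minz v q" "fst p = fst q"
  have "vl v p = vl v q" using minz_F[OF m(1)] minz_F[OF m(2)] by simp
  hence "snd p = snd q" using m(3) unfolding vl_def by simp
  thus ?thesis using m(3) by (simp add: prod_eq_iff)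
qed

lemma finBr: "finite Br"
proof -
  have "Br \<subseteq> (\<lambda>(p,q). (of_nat (snd q) - of_nat (snd p)) / (of_nat (fst p) - of_nat (fst q))) ` (P \<times> P)"
  proof
    fix v assume "v \<in> Br"
    then obtain p q where pq: "minz v p" "minz v q" "p \<noteq> q" unfolding Br_def by blast
    have ne: "fst p \<noteq> fst q" using minz_same_x pq by blast
    have "vl v p = vl v q" using minz_F[OF pq(1)] minz_F[OF pq(2)] by simp
    hence "v * (of_nat (fst p) - of_nat (fst q)) = of_nat (snd q) - of_nat (snd p)"
      unfolding vl_def by (simp add: algebra_simps)
    moreover have "(of_nat (fst p) - of_nat (fst q) :: rat) \<noteq> 0" using ne by simp
    ultimately have "v = (of_nat (snd q) - of_nat (snd p)) / (of_nat (fst p) - of_nat (fst q))"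
      by (simp add: eq_divide_eq)
    moreover have "(p, q) \<in> P \<times> P" using pq unfolding minz_def by blast
    ultimately show "v \<in> (\<lambda>(p,q). (of_nat (snd q) - of_nat (snd p)) / (of_nat (fst p) - of_nat (fst q))) ` (P \<times> P)"
      by (metis (no_types, lifting) case_prod_conv image_eqI)
  qed
  moreover have "finite (P \<times> P)" using finP by simp
  ultimately show ?thesis using finite_subset by blast
qed


lemma Br_ne: "Br \<noteq> {}"
proof -
  define J where "J = {j. (1, j) \<in> P}"
  have "J \<subseteq> snd ` P" unfolding J_def by (metis (mono_tags, lifting) imageI mem_Collect_eq snd_conv subsetI)
  hence finJ: "finite J" using finite_imageI[OF finP, of snd] finite_subset by blast
  have neJ: "J \<noteq> {}" unfolding J_def using P0 by blast
  define j0 where "j0 = Min J"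
  have q0P: "(1, j0) \<in> P" using Min_in[OF finJ neJ] unfolding j0_def J_def by simp
  define B where "B = {p \<in> P. fst p > 1}"
  have finB: "finite B" unfolding B_def using finP by simp
  have "l ^ n > 1" using one_less_power[OF l_gt1] n1 by simp
  hence "(l ^ n, pval (a n)) \<in> B" unfolding B_def using Pn by simp
  hence neB: "B \<noteq> {}" by blast
  define c where "c p = (of_nat j0 - of_nat (snd p)) / (of_nat (fst p) - 1 :: rat)" for p
  define b where "b = Max (c ` B)"
  have "b \<in> c ` B" unfolding b_def using finB neB by simp
  then obtain ps where ps: "ps \<in> B" "c ps = b" by blast
  have cle: "c p \<le> b" if "p \<in> B" for p unfolding b_def using finB that by simp
  have key: "vl b (1, j0) \<le> vl b r" if "r \<in> P" for r
  proof (cases "fst r = 1")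
    case True
    hence "(1, snd r) \<in> P" using that by (metis prod.collapse)
    hence "snd r \<in> J" unfolding J_def by simp
    hence "j0 \<le> snd r" unfolding j0_def using finJ by simp
    thus ?thesis unfolding vl_def using True by simp
  next
    case False
    hence gt: "fst r > 1" using P_x_ge1[OF that] by simp
    hence "r \<in> B" unfolding B_def using that by simp
    hence "c r \<le> b" by (rule cle)
    moreover have pos: "(of_nat (fst r) - 1 :: rat) > 0" using gt by simp
    ultimately have "of_nat j0 - of_nat (snd r) \<le> b * (of_nat (fst r) - 1)"
      unfolding c_def by (simp add: pos_divide_le_eq)
    thus ?thesis unfolding vl_def by (simp add: algebra_simps)
  qed
  have psgt: "(of_nat (fst ps) - 1 :: rat) > 0" using ps(1) unfolding B_def by simp
  have "b * (of_nat (fst ps) - 1) = of_nat j0 - of_nat (snd ps)"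
    using ps(2) psgt unfolding c_def by (simp add: divide_eq_eq)
  hence eq: "vl b ps = vl b (1, j0)" unfolding vl_def by (simp add: algebra_simps)
  have psP: "ps \<in> P" using ps(1) unfolding B_def by simp
  have m1: "minz b (1, j0)" unfolding minz_def using q0P key by blast
  have m2: "minz b ps" unfolding minz_def using psP key eq by simp
  have "ps \<noteq> (1, j0)" using ps(1) unfolding B_def by auto
  thus ?thesis using m1 m2 unfolding Br_def by blast
qed

lemma slopes_eq: "slopes l n a = uminus ` Br"
proof
  show "slopes l n a \<subseteq> uminus ` Br"
  proof
    fix \<mu> assume "\<mu> \<in> slopes l n a"
    hence "- \<mu> \<in> Br" by (rule slopes_imp_Br)
    thus "\<mu> \<in> uminus ` Br" by (rule image_eqI[rotated]) simp
  qed
  show "uminus ` Br \<subseteq> slopes l n a"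
  proof
    fix x assume "x \<in> uminus ` Br"
    then obtain v where "v \<in> Br" "x = - v" by blast
    thus "x \<in> slopes l n a" using Br_imp_slopes[of x] by simp
  qed
qed

lemma fin_slopes: "finite (slopes l n a)"
  unfolding slopes_eq using finBr by simp

lemma slopes_ne: "slopes l n a \<noteq> {}"
  unfolding slopes_eq using Br_ne by simp

end


context mth begin

abbreviation "V \<equiv> Vall l n a"

definition depth :: "rat \<Rightarrow> nat" where "depth w = (LEAST k. w \<in> Vseq l n a k)"

lemma V_iff: "w \<in> V \<longleftrightarrow> (\<exists>k. w \<in> Vseq l n a k)"
  unfolding Vall_def by blast

lemma depth_in: "w \<in> V \<Longrightarrow> w \<in> Vseq l n a (depth w)"
  unfolding depth_def V_iff by (metis LeastI)

lemma depth_le: "w \<in> Vseq l n a k \<Longrightarrow> depth w \<le> k"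
  unfolding depth_def by (rule Least_le)

lemma Vseq_V: "w \<in> Vseq l n a k \<Longrightarrow> w \<in> V"
  unfolding V_iff by blast

lemma pred_ex: "w \<in> V \<Longrightarrow> depth w > 0 \<Longrightarrow>
    \<exists>u p. p \<in> P \<and> u \<in> V \<and> depth u < depth w \<and> w = g p u"
proof -
  assume w: "w \<in> V" "depth w > 0"
  then obtain k where k: "depth w = Suc k" using gr0_implies_Suc by blast
  hence "w \<in> Vseq l n a (Suc k)" using depth_in[OF w(1)] by simp
  then obtain u p where "u \<in> Vseq l n a k" "p \<in> P" "w = g p u" unfolding Vseq_Suc by blast
  moreover have "depth u < depth w" using depth_le[OF \<open>u \<in> _\<close>] k by simp
  ultimately show ?thesis using Vseq_V by blast
qed

definition bad :: "(nat \<Rightarrow> rat) \<Rightarrow> bool" where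
  "bad f \<longleftrightarrow> (\<forall>i. f i \<in> V) \<and> (\<forall>i. f (Suc i) < f i)"

lemma bad_less: assumes "bad f" "i < j" shows "f j < f i"
  using assms(2)
proof (induction rule: less_Suc_induct)
  case (1 i) then show ?case using assms(1) unfolding bad_def by simp
next
  case (2 i j k) then show ?case by simp
qed

lemma bad_inj: assumes "bad f" shows "inj f"
proof (rule injI)
  fix x y assume e: "f x = f y"
  show "x = y"
  proof (rule ccontr)
    assume "x \<noteq> y"
    hence "x < y \<or> y < x" by arith
    thus False using bad_less[OF assms, of x y] bad_less[OF assms, of y x] e by auto
  qed
qed

definition Ext where "Ext h k = {f. bad f \<and> (\<forall>j<k. f j = h j)}"

definition stp where
  "stp h k = (SOME f. f \<in> Ext h k \<and> (\<forall>f'\<in>Ext h k. depth (f k) \<le> depth (f' k)))"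

lemma stp_prop: "f \<in> Ext h k \<Longrightarrow>
    stp h k \<in> Ext h k \<and> (\<forall>f'\<in>Ext h k. depth (stp h k k) \<le> depth (f' k))"
proof -
  assume "f \<in> Ext h k"
  hence "\<exists>f0. f0 \<in> Ext h k \<and> (\<forall>f'. f' \<in> Ext h k \<longrightarrow> depth (f0 k) \<le> depth (f' k))"
    by (rule ex_has_least_nat[where P="\<lambda>f. f \<in> Ext h k" and m="\<lambda>f. depth (f k)"])
  hence "\<exists>f0. f0 \<in> Ext h k \<and> (\<forall>f'\<in>Ext h k. depth (f0 k) \<le> depth (f' k))" by blast
  thus ?thesis unfolding stp_def by (rule someI_ex)
qed

lemma self_Ext: "bad f \<Longrightarrow> f \<in> Ext f k"
  unfolding Ext_def by simp

lemma no_bad: "\<not> bad f0"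
proof
  assume b0: "bad f0"
  define H where "H = rec_nat (stp f0 0) (\<lambda>k hk. stp hk (Suc k))"
  have H0: "H 0 = stp f0 0" unfolding H_def by simp
  have HS: "H (Suc k) = stp (H k) (Suc k)" for k unfolding H_def by simp
  have HE0: "H 0 \<in> Ext f0 0" using stp_prop[OF self_Ext[OF b0]] H0 by simp
  have Hbad: "bad (H k)" for k
  proof (induction k)
    case 0 show ?case using HE0 unfolding Ext_def by blast
  next
    case (Suc k)
    have "H (Suc k) \<in> Ext (H k) (Suc k)" using stp_prop[OF self_Ext[OF Suc]] HS by simp
    thus ?case unfolding Ext_def by blast
  qed
  have HES: "H (Suc k) \<in> Ext (H k) (Suc k)" for k
    using stp_prop[OF self_Ext[OF Hbad[of k]]] HS by simp
  have Hagree1: "H (Suc k) j = H k j" if "j \<le> k" for k j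
    using HES[of k] that unfolding Ext_def by simp
  have Hagree: "H k j = H j j" if "j \<le> k" for k j
    using that
  proof (induction k rule: dec_induct)
    case (step k) then show ?case using Hagree1 by simp
  qed simp
  define s where "s j = H j j" for j
  have sbad: "bad s"
    unfolding bad_def
  proof (intro conjI allI)
    fix i show "s i \<in> V" unfolding s_def using Hbad[of i] unfolding bad_def by blast
    have "H (Suc i) (Suc i) < H (Suc i) i" using Hbad[of "Suc i"] unfolding bad_def by blast
    thus "s (Suc i) < s i" unfolding s_def using Hagree[of i "Suc i"] by simp
  qed
  have smin: "depth (s k) \<le> depth (f k)" if "bad f" "\<forall>j<k. f j = s j" for f k
  proof (cases k)
    case 0
    have "f \<in> Ext f0 0" unfolding Ext_def using that by simp
    hence "depth (stp f0 0 0) \<le> depth (f 0)" using stp_prop[OF self_Ext[OF b0], of 0] by blast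
    thus ?thesis using 0 H0 unfolding s_def by simp
  next
    case (Suc k')
    have "\<forall>j<Suc k'. f j = H k' j"
    proof (intro allI impI)
      fix j assume "j < Suc k'"
      hence "H k' j = H j j" using Hagree[of j k'] by simp
      thus "f j = H k' j" using that(2) \<open>j < Suc k'\<close> Suc unfolding s_def by simp
    qed
    hence fE: "f \<in> Ext (H k') (Suc k')" unfolding Ext_def using that(1) by blast
    have "depth (stp (H k') (Suc k') (Suc k')) \<le> depth (f (Suc k'))"
      using stp_prop[OF fE] fE by blast
    moreover have "stp (H k') (Suc k') = H (Suc k')" using HS by simp
    ultimately show ?thesis unfolding s_def using Suc by simp
  qed
  define I0 where "I0 = {i. depth (s i) > 0}"
  have "{i. depth (s i) = 0} \<subseteq> s -` Vseq l n a 0"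
  proof
    fix i assume "i \<in> {i. depth (s i) = 0}"
    hence "depth (s i) = 0" by simp
    moreover have "s i \<in> V" using sbad unfolding bad_def by blast
    ultimately show "i \<in> s -` Vseq l n a 0" using depth_in by fastforce
  qed
  moreover have "finite (s -` Vseq l n a 0)"
    using finite_vimageI[OF _ bad_inj[OF sbad]] finBr Vseq0 by simp
  ultimately have fin0: "finite {i. depth (s i) = 0}" by (rule finite_subset)
  have "I0 = UNIV - {i. depth (s i) = 0}" unfolding I0_def by auto
  hence infI0: "infinite I0" using fin0 by (simp add: Diff_infinite_finite)
  have ex: "\<forall>i\<in>I0. \<exists>pu. fst pu \<in> P \<and> snd pu \<in> V \<and> depth (snd pu) < depth (s i) \<and> s i = g (fst pu) (snd pu)"
  proof
    fix i assume "i \<in> I0"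
    hence "depth (s i) > 0" unfolding I0_def by simp
    moreover have "s i \<in> V" using sbad unfolding bad_def by blast
    ultimately obtain u p where "p \<in> P \<and> u \<in> V \<and> depth u < depth (s i) \<and> s i = g p u"
      using pred_ex by blast
    thus "\<exists>pu. fst pu \<in> P \<and> snd pu \<in> V \<and> depth (snd pu) < depth (s i) \<and> s i = g (fst pu) (snd pu)"
      by (metis fst_conv snd_conv)
  qed
  from bchoice[OF ex] obtain pu where pu: "\<forall>i\<in>I0. fst (pu i) \<in> P \<and> snd (pu i) \<in> V \<and>
      depth (snd (pu i)) < depth (s i) \<and> s i = g (fst (pu i)) (snd (pu i))"
    by blast
  define pp where "pp i = fst (pu i)" for i
  define pr where "pr i = snd (pu i)" for i
  have "pp ` I0 \<subseteq> P" using pu unfolding pp_def by blast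
  hence pp_fin: "finite (pp ` I0)" using finP finite_subset by blast
  obtain i1 where "i1 \<in> I0" and infI: "infinite {i \<in> I0. pp i = pp i1}"
    using pigeonhole_infinite[OF infI0 pp_fin] by blast
  define p where "p = pp i1"
  define I where "I = {i \<in> I0. pp i = p}"
  have infI': "infinite I" using infI unfolding I_def p_def by simp
  define e where "e = enumerate I"
  have eI: "e k \<in> I" for k unfolding e_def using enumerate_in_set[OF infI'] .
  have emono: "e k < e (Suc k)" for k unfolding e_def using enumerate_step[OF infI'] .
  have eprop: "p \<in> P \<and> pr (e k) \<in> V \<and> depth (pr (e k)) < depth (s (e k)) \<and> s (e k) = g p (pr (e k))" for k
    using pu eI[of k] unfolding I_def pp_def pr_def by auto
  define i0 where "i0 = e 0"
  define f where "f j = (if j < i0 then s j else pr (e (j - i0)))" for j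
  have fbad: "bad f"
    unfolding bad_def
  proof (intro conjI allI)
    fix j
    show "f j \<in> V" unfolding f_def using sbad eprop unfolding bad_def by auto
    show "f (Suc j) < f j"
    proof (cases "Suc j < i0")
      case True thus ?thesis unfolding f_def using sbad unfolding bad_def by simp
    next
      case False
      show ?thesis
      proof (cases "Suc j = i0")
        case True
        have "f (Suc j) = pr (e 0)" unfolding f_def using True by simp
        also have "\<dots> \<le> g p (pr (e 0))" using g_ge eprop by blast
        also have "\<dots> = s i0" using eprop[of 0] unfolding i0_def by simp
        also have "\<dots> < s j" using sbad True unfolding bad_def by blast
        also have "s j = f j" unfolding f_def using True by simp
        finally show ?thesis .
      next
        case False2: False
        hence ge: "j \<ge> i0" using False by simp
        define k where "k = j - i0"
        have fj: "f j = pr (e k)" and fSj: "f (Suc j) = pr (e (Suc k))"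
          unfolding f_def k_def using ge by (auto simp: Suc_diff_le)
        have lt: "s (e (Suc k)) < s (e k)" using bad_less[OF sbad emono] .
        show ?thesis
        proof (rule ccontr)
          assume "\<not> f (Suc j) < f j"
          hence "pr (e k) \<le> pr (e (Suc k))" using fj fSj by simp
          hence "g p (pr (e k)) \<le> g p (pr (e (Suc k)))" using g_mono eprop by blast
          thus False using lt eprop[of k] eprop[of "Suc k"] by simp
        qed
      qed
    qed
  qed
  have "\<forall>j<i0. f j = s j" unfolding f_def by simp
  hence "depth (s i0) \<le> depth (f i0)" using smin fbad by blast
  also have "f i0 = pr (e 0)" unfolding f_def by simp
  finally have "depth (s i0) \<le> depth (pr (e 0))" .
  moreover have "depth (pr (e 0)) < depth (s (e 0))" using eprop by blast
  ultimately show False unfolding i0_def by simp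
qed

lemma V_wo: "S \<subseteq> V \<Longrightarrow> S \<noteq> {} \<Longrightarrow> \<exists>z\<in>S. \<forall>y\<in>S. z \<le> y"
proof -
  assume S: "S \<subseteq> V" "S \<noteq> {}"
  define r where "r = {(x, y). x \<in> V \<and> y \<in> V \<and> x < y}"
  have "wf r"
    unfolding wf_iff_no_infinite_down_chain
  proof
    assume "\<exists>f. \<forall>i. (f (Suc i), f i) \<in> r"
    then obtain f where f: "\<forall>i. (f (Suc i), f i) \<in> r" by blast
    hence "bad f" unfolding bad_def r_def by auto
    thus False using no_bad by blast
  qed
  then obtain z where z: "z \<in> S" "\<And>y. (y, z) \<in> r \<Longrightarrow> y \<notin> S"
    using wfE_min' S(2) by metis
  have "\<forall>y\<in>S. z \<le> y"
  proof
    fix y assume "y \<in> S"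
    show "z \<le> y"
    proof (rule ccontr)
      assume "\<not> z \<le> y"
      hence "(y, z) \<in> r" unfolding r_def using S(1) z(1) \<open>y \<in> S\<close> by auto
      thus False using z(2) \<open>y \<in> S\<close> by blast
    qed
  qed
  thus ?thesis using z(1) by blast
qed

end


locale mthd = mth a l n for a :: "nat \<Rightarrow> 'a::field poly" and l n :: nat +
  fixes d :: nat
  assumes d1: "d \<ge> 1" and dmu: "\<forall>\<mu>\<in>slopes l n a. \<exists>k::int. of_nat d * \<mu> = of_int k"
begin

definition htle :: "rat \<Rightarrow> nat \<Rightarrow> bool" where
  "htle v i \<longleftrightarrow> (\<exists>k::int. v * of_nat (d * l ^ i) = of_int k)"

lemma dl_pos: "(of_nat (d * l ^ i) :: rat) > 0"
  using d1 l_pos by simp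

lemma div_iff: "(c::rat) \<noteq> 0 \<Longrightarrow> (v = k / c) \<longleftrightarrow> (v * c = k)"
  by (simp add: eq_divide_eq)

lemma htle_iff: "(\<exists>k::int. v = of_int k / of_nat (d * l ^ i)) \<longleftrightarrow> htle v i"
proof -
  have ne: "(of_nat (d * l ^ i) :: rat) \<noteq> 0" using dl_pos[of i] by linarith
  show ?thesis
  proof
    assume "\<exists>k::int. v = of_int k / of_nat (d * l ^ i)"
    then obtain k :: int where "v = of_int k / of_nat (d * l ^ i)" by blast
    hence "v * of_nat (d * l ^ i) = of_int k" using div_iff[OF ne] by blast
    thus "htle v i" unfolding htle_def by blast
  next
    assume "htle v i"
    then obtain k :: int where "v * of_nat (d * l ^ i) = of_int k" unfolding htle_def by blast
    hence "v = of_int k / of_nat (d * l ^ i)" using div_iff[OF ne] by blast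
    thus "\<exists>k::int. v = of_int k / of_nat (d * l ^ i)" by blast
  qed
qed

lemma Zdl_iff: "v \<in> Zdl d l \<longleftrightarrow> (\<exists>i. htle v i)"
  unfolding Zdl_def using htle_iff by blast

lemma hgt_eq: "hgt d l v = (LEAST i. htle v i)"
  unfolding hgt_def using htle_iff by simp

lemma hgt_htle: "htle v i \<Longrightarrow> htle v (hgt d l v)"
  unfolding hgt_eq by (rule LeastI)

lemma hgt_le: "htle v i \<Longrightarrow> hgt d l v \<le> i"
  unfolding hgt_eq by (rule Least_le)

lemma htle_mono: "htle v i \<Longrightarrow> i \<le> j \<Longrightarrow> htle v j"
proof -
  assume h: "htle v i" "i \<le> j"
  then obtain k where k: "v * of_nat (d * l ^ i) = of_int k" unfolding htle_def by blast
  have "l ^ j = l ^ i * l ^ (j - i)" using h(2) by (simp add: power_add[symmetric])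
  hence "v * of_nat (d * l ^ j) = of_int (k * int (l ^ (j - i)))"
    using k by (simp add: algebra_simps)
  thus ?thesis unfolding htle_def by blast
qed

lemma htle_ht_mono: "htle v i \<Longrightarrow> hgt d l v \<le> j \<Longrightarrow> htle v j"
  using hgt_htle htle_mono by blast

lemma K:
  assumes eq: "w * of_nat (l ^ t) + of_nat J = u * of_nat (l ^ i) + of_nat j"
    and iH: "i < H" and hw: "htle w (t + H - 1 - i)"
  shows "htle u (H - 1)"
proof -
  obtain k where k: "w * of_nat (d * l ^ (t + H - 1 - i)) = of_int k" using hw unfolding htle_def by blast
  have e1: "l ^ (t + H - 1 - i) = l ^ t * l ^ (H - 1 - i)" using iH by (simp add: power_add[symmetric])
  have e2: "l ^ (H - 1) = l ^ i * l ^ (H - 1 - i)" using iH by (simp add: power_add[symmetric])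
  have "u * of_nat (d * l ^ (H - 1)) = (u * of_nat (l ^ i)) * of_nat (d * l ^ (H - 1 - i))"
    unfolding e2 by (simp add: algebra_simps)
  also have "u * of_nat (l ^ i) = w * of_nat (l ^ t) + of_nat J - of_nat j" using eq by simp
  also have "(w * of_nat (l ^ t) + of_nat J - of_nat j) * of_nat (d * l ^ (H - 1 - i)) =
      w * of_nat (d * l ^ (t + H - 1 - i)) + (of_nat J - of_nat j) * of_nat (d * l ^ (H - 1 - i))"
    unfolding e1 by (simp add: algebra_simps)
  also have "\<dots> = of_int (k + (int J - int j) * int (d * l ^ (H - 1 - i)))"
    using k by simp
  finally show ?thesis unfolding htle_def by blast
qed

lemma step_low:
  assumes eq: "w * of_nat (l ^ t) + of_nat J = u * of_nat x + of_nat j" and hu: "htle u m"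
  shows "htle w (m + t)"
proof -
  obtain k where k: "u * of_nat (d * l ^ m) = of_int k" using hu unfolding htle_def by blast
  have "w * of_nat (d * l ^ (m + t)) = (w * of_nat (l ^ t)) * of_nat (d * l ^ m)"
    by (simp add: power_add algebra_simps)
  also have "w * of_nat (l ^ t) = u * of_nat x + of_nat j - of_nat J" using eq by simp
  also have "(u * of_nat x + of_nat j - of_nat J) * of_nat (d * l ^ m) =
       (u * of_nat (d * l ^ m)) * of_nat x + (of_nat j - of_nat J) * of_nat (d * l ^ m)"
    by (simp add: algebra_simps)
  also have "\<dots> = of_int (k * int x + (int j - int J) * int (d * l ^ m))" using k by simp
  finally show ?thesis unfolding htle_def by blast
qed

lemma H1:
  assumes "htle u m" "htle w m" "u < w"
  shows "w - u \<ge> 1 / of_nat (d * l ^ m)"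
proof -
  obtain k1 where k1: "u * of_nat (d * l ^ m) = of_int k1" using assms(1) unfolding htle_def by blast
  obtain k2 where k2: "w * of_nat (d * l ^ m) = of_int k2" using assms(2) unfolding htle_def by blast
  have "u * of_nat (d * l ^ m) < w * of_nat (d * l ^ m)" using mult_strict_right_mono[OF assms(3) dl_pos[of m]] .
  hence "k1 < k2" using k1 k2 by simp
  hence "of_int k2 - of_int k1 \<ge> (1::rat)" by (simp add: of_int_diff[symmetric] del: of_int_diff)
  hence "(w - u) * of_nat (d * l ^ m) \<ge> 1" using k1 k2 by (simp add: algebra_simps)
  thus ?thesis using dl_pos[of m] by (simp add: pos_divide_le_eq)
qed

lemma step_eq:
  assumes "p \<in> P"
  shows "\<exists>t J. t \<le> n \<and> minz (g p u) (l ^ t, J) \<and>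
      g p u * of_nat (l ^ t) + of_nat J = u * of_nat (fst p) + of_nat (snd p)"
proof -
  obtain q where q: "minz (g p u) q" using ex_minz by blast
  then obtain t where t: "t \<le> n" "fst q = l ^ t" using P_x unfolding minz_def by blast
  have "F (g p u) = vl (g p u) q" using minz_F[OF q] .
  hence "vl (g p u) q = vl u p" using F_g by simp
  hence "g p u * of_nat (l ^ t) + of_nat (snd q) = u * of_nat (fst p) + of_nat (snd p)"
    unfolding vl_def using t by simp
  moreover have "q = (l ^ t, snd q)" using t by (simp add: prod_eq_iff)
  ultimately show ?thesis using t q by metis
qed

lemma V_Zdl: "v \<in> V \<Longrightarrow> \<exists>i. htle v i"
proof -
  have "\<forall>v\<in>Vseq l n a k. \<exists>i. htle v i" for k
  proof (induction k)
    case 0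
    show ?case
    proof
      fix v assume "v \<in> Vseq l n a 0"
      hence "- v \<in> slopes l n a" unfolding Vseq0 using Br_imp_slopes[of "-v"] by simp
      then obtain k where "of_nat d * (- v) = of_int k" using dmu by blast
      hence "v * of_nat (d * l ^ 0) = of_int (- k)" by (simp add: algebra_simps)
      thus "\<exists>i. htle v i" unfolding htle_def by blast
    qed
  next
    case (Suc k)
    show ?case
    proof
      fix w assume "w \<in> Vseq l n a (Suc k)"
      then obtain u p where up: "u \<in> Vseq l n a k" "p \<in> P" "w = g p u" unfolding Vseq_Suc by blast
      obtain m where m: "htle u m" using Suc up by blast
      obtain t J where tJ: "g p u * of_nat (l ^ t) + of_nat J = u * of_nat (fst p) + of_nat (snd p)"
        using step_eq[OF up(2)] by blast
      show "\<exists>i. htle w i" using step_low[OF tJ m] up(3) by blast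
    qed
  qed
  thus "v \<in> V \<Longrightarrow> \<exists>i. htle v i" unfolding V_iff by blast
qed

end


context mth begin

lemma Dlin: "vl v r - vl v p = (vl v' r - vl v' p) + (v - v') * (of_nat (fst r) - of_nat (fst p))"
  unfolding vl_def by (simp add: algebra_simps)

lemma Droot: "fst r \<noteq> fst p \<Longrightarrow>
   vl v r - vl v p = (v - (of_nat (snd p) - of_nat (snd r)) / (of_nat (fst r) - of_nat (fst p))) *
                      (of_nat (fst r) - of_nat (fst p))"
proof -
  assume ne: "fst r \<noteq> fst p"
  define D where "D = (of_nat (fst r) - of_nat (fst p) :: rat)"
  define A where "A = (of_nat (snd p) - of_nat (snd r) :: rat)"
  have "D \<noteq> 0" using ne unfolding D_def by simp
  hence "(v - A / D) * D = v * D - A" by (simp add: left_diff_distrib)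
  moreover have "vl v r - vl v p = v * D - A" unfolding vl_def D_def A_def by (simp add: algebra_simps)
  ultimately show ?thesis unfolding D_def A_def by simp
qed

lemma minz_interval:
  assumes "minz b p" "minz w p" "b \<le> v" "v \<le> w"
  shows "minz v p"
  unfolding minz_def
proof (intro conjI ballI)
  show "p \<in> P" using assms(1) unfolding minz_def by blast
  fix r assume r: "r \<in> P"
  have Db: "vl b r - vl b p \<ge> 0" and Dw: "vl w r - vl w p \<ge> 0"
    using assms(1,2) r unfolding minz_def by auto
  show "vl v p \<le> vl v r"
  proof (cases "fst r \<ge> fst p")
    case True
    have "vl v r - vl v p = (vl b r - vl b p) + (v - b) * (of_nat (fst r) - of_nat (fst p))"
      by (rule Dlin)
    moreover have "(of_nat (fst r) - of_nat (fst p) :: rat) \<ge> 0" using True by simp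
    hence "(v - b) * (of_nat (fst r) - of_nat (fst p)) \<ge> 0"
      using assms(3) by (intro mult_nonneg_nonneg) simp_all
    ultimately show ?thesis using Db by linarith
  next
    case False
    have "vl v r - vl v p = (vl w r - vl w p) + (v - w) * (of_nat (fst r) - of_nat (fst p))"
      by (rule Dlin)
    moreover have "(of_nat (fst r) - of_nat (fst p) :: rat) \<le> 0" using False by simp
    hence "(v - w) * (of_nat (fst r) - of_nat (fst p)) \<ge> 0"
      using assms(4) by (intro mult_nonpos_nonpos) simp_all
    ultimately show ?thesis using Dw by linarith
  qed
qed

lemma L1:
  assumes uw: "u < w" and noB: "\<forall>b\<in>Br. \<not> (u < b \<and> b < w)"
  shows "\<exists>ps. minz w ps \<and> minz u ps"
proof -
  define M where "M = {q. minz w q}"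
  have finM: "finite M" unfolding M_def minz_def using finP by simp
  have neM: "M \<noteq> {}" unfolding M_def using ex_minz by blast
  obtain ps where ps: "ps \<in> M" "\<forall>q\<in>M. fst q \<le> fst ps"
  proof -
    have "Max (fst ` M) \<in> fst ` M" using finM neM by simp
    then obtain ps where "Max (fst ` M) = fst ps" "ps \<in> M" by (rule imageE)
    moreover have "\<forall>q\<in>M. fst q \<le> Max (fst ` M)" using finM by simp
    ultimately show ?thesis using that by simp
  qed
  have psw: "minz w ps" using ps(1) unfolding M_def by simp
  have psP: "ps \<in> P" using psw unfolding minz_def by blast
  have Dw: "vl w r - vl w ps \<ge> 0" if "r \<in> P" for r using psw that unfolding minz_def by auto
  have Dwpos: "vl w r - vl w ps > 0" if "r \<in> P" "fst r > fst ps" for r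
  proof (rule ccontr)
    assume "\<not> ?thesis"
    hence "vl w r = vl w ps" using Dw[OF that(1)] by simp
    hence "minz w r" using psw that(1) unfolding minz_def by simp
    hence "fst r \<le> fst ps" using ps(2) unfolding M_def by blast
    thus False using that(2) by simp
  qed
  define cr where "cr r = (of_nat (snd ps) - of_nat (snd r)) / (of_nat (fst r) - of_nat (fst ps) :: rat)" for r
  have Dr: "vl v r - vl v ps = (v - cr r) * (of_nat (fst r) - of_nat (fst ps))"
    if "fst r \<noteq> fst ps" for r v unfolding cr_def using Droot[OF that] .
  show ?thesis
  proof (rule ccontr)
    assume nt: "\<not> ?thesis"
    then obtain q where q: "q \<in> P" "vl u q < vl u ps"
      using psw psP unfolding minz_def by (meson not_le)
    have xq: "fst q > fst ps"
    proof (rule ccontr)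
      assume "\<not> fst q > fst ps"
      hence "(of_nat (fst q) - of_nat (fst ps) :: rat) \<le> 0" by simp
      hence "(w - u) * (of_nat (fst q) - of_nat (fst ps)) \<le> 0" using uw
        by (intro mult_nonneg_nonpos) simp_all
      moreover have "vl w q - vl w ps = (vl u q - vl u ps) + (w - u) * (of_nat (fst q) - of_nat (fst ps))"
        by (rule Dlin)
      ultimately show False using Dw[OF q(1)] q(2) by linarith
    qed
    have gx: "(of_nat (fst q) - of_nat (fst ps) :: rat) > 0" using xq by simp
    have "(u - cr q) * (of_nat (fst q) - of_nat (fst ps)) < 0" using Dr[of q u] xq q(2) by simp
    hence cq1: "u < cr q" using gx by (simp add: mult_less_0_iff)
    have "(w - cr q) * (of_nat (fst q) - of_nat (fst ps)) > 0" using Dr[of q w] xq Dwpos[OF q(1) xq] by simp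
    hence cq2: "cr q < w" using gx by (simp add: zero_less_mult_iff)
    define Q where "Q = {r \<in> P. fst r > fst ps \<and> u < cr r \<and> cr r < w}"
    have finQ: "finite Q" unfolding Q_def using finP by simp
    have qQ: "q \<in> Q" unfolding Q_def using q(1) xq cq1 cq2 by simp
    define c where "c = Max (cr ` Q)"
    have "c \<in> cr ` Q" unfolding c_def using finQ qQ by (intro Max_in) auto
    then obtain qs where qs: "qs \<in> Q" "cr qs = c" by blast
    have cge: "cr r \<le> c" if "r \<in> Q" for r unfolding c_def using finQ that by simp
    have cu: "u < c" and cw: "c < w" using qs unfolding Q_def by auto
    have m1: "minz c ps"
      unfolding minz_def
    proof (intro conjI psP ballI)
      fix r assume r: "r \<in> P"
      consider "fst r < fst ps" | "fst r = fst ps" | "fst r > fst ps" by arith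
      thus "vl c ps \<le> vl c r"
      proof cases
        case 1
        have "vl c r - vl c ps = (vl w r - vl w ps) + (c - w) * (of_nat (fst r) - of_nat (fst ps))"
          by (rule Dlin)
        moreover have "(of_nat (fst r) - of_nat (fst ps) :: rat) \<le> 0" using 1 by simp
        hence "(c - w) * (of_nat (fst r) - of_nat (fst ps)) \<ge> 0" using cw
          by (intro mult_nonpos_nonpos) simp_all
        ultimately show ?thesis using Dw[OF r] by linarith
      next
        case 2
        have "vl c r - vl c ps = (vl w r - vl w ps) + (c - w) * (of_nat (fst r) - of_nat (fst ps))"
          by (rule Dlin)
        thus ?thesis using Dw[OF r] 2 by simp
      next
        case 3
        have g3: "(of_nat (fst r) - of_nat (fst ps) :: rat) > 0" using 3 by simp
        have "(w - cr r) * (of_nat (fst r) - of_nat (fst ps)) > 0" using Dr[of r w] 3 Dwpos[OF r 3] by simp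
        hence crw: "cr r < w" using g3 by (simp add: zero_less_mult_iff)
        have "cr r \<le> c"
        proof (cases "u < cr r")
          case True
          hence "r \<in> Q" unfolding Q_def using r 3 crw by simp
          thus ?thesis by (rule cge)
        next
          case False thus ?thesis using cu by simp
        qed
        hence "(c - cr r) * (of_nat (fst r) - of_nat (fst ps)) \<ge> 0" using g3 by simp
        thus ?thesis using Dr[of r c] 3 by simp
      qed
    qed
    have qsP: "qs \<in> P" and xqs: "fst qs > fst ps" using qs(1) unfolding Q_def by auto
    have "vl c qs - vl c ps = 0" using Dr[of qs c] xqs qs(2) by simp
    hence m2: "minz c qs" using m1 qsP unfolding minz_def by simp
    have "qs \<noteq> ps" using xqs by auto
    hence "c \<in> Br" unfolding Br_def using m1 m2 by blast
    thus False using noB cu cw by blast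
  qed
qed

lemma L2:
  assumes p0: "minz u p0" and q: "q \<in> P" "fst q > fst p0"
  shows "\<exists>b\<in>Br. b \<le> u \<and> minz b p0"
proof -
  have p0P: "p0 \<in> P" using p0 unfolding minz_def by blast
  have Du: "vl u r - vl u p0 \<ge> 0" if "r \<in> P" for r using p0 that unfolding minz_def by auto
  define cr where "cr r = (of_nat (snd p0) - of_nat (snd r)) / (of_nat (fst r) - of_nat (fst p0) :: rat)" for r
  have Dr: "vl v r - vl v p0 = (v - cr r) * (of_nat (fst r) - of_nat (fst p0))"
    if "fst r \<noteq> fst p0" for r v unfolding cr_def using Droot[OF that] .
  define Q where "Q = {r \<in> P. fst r > fst p0}"
  have finQ: "finite Q" unfolding Q_def using finP by simp
  have qQ: "q \<in> Q" unfolding Q_def using q by simp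
  have crle: "cr r \<le> u" if "r \<in> Q" for r
  proof -
    have r: "r \<in> P" "fst r > fst p0" using that unfolding Q_def by auto
    have g: "(of_nat (fst r) - of_nat (fst p0) :: rat) > 0" using r by simp
    have "(u - cr r) * (of_nat (fst r) - of_nat (fst p0)) \<ge> 0" using Dr[of r u] r Du[OF r(1)] by simp
    thus ?thesis using g by (simp add: zero_le_mult_iff)
  qed
  define b where "b = Max (cr ` Q)"
  have "b \<in> cr ` Q" unfolding b_def using finQ qQ by (intro Max_in) auto
  then obtain qs where qs: "qs \<in> Q" "cr qs = b" by blast
  have bge: "cr r \<le> b" if "r \<in> Q" for r unfolding b_def using finQ that by simp
  have bu: "b \<le> u" using crle[OF qs(1)] qs(2) by simp
  have m1: "minz b p0"
    unfolding minz_def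
  proof (intro conjI p0P ballI)
    fix r assume r: "r \<in> P"
    show "vl b p0 \<le> vl b r"
    proof (cases "fst r > fst p0")
      case True
      have g: "(of_nat (fst r) - of_nat (fst p0) :: rat) > 0" using True by simp
      have "r \<in> Q" unfolding Q_def using r True by simp
      hence "(b - cr r) * (of_nat (fst r) - of_nat (fst p0)) \<ge> 0" using bge g by simp
      thus ?thesis using Dr[of r b] True by simp
    next
      case False
      have "vl b r - vl b p0 = (vl u r - vl u p0) + (b - u) * (of_nat (fst r) - of_nat (fst p0))"
        by (rule Dlin)
      moreover have "(of_nat (fst r) - of_nat (fst p0) :: rat) \<le> 0" using False by simp
      hence "(b - u) * (of_nat (fst r) - of_nat (fst p0)) \<ge> 0" using bu
        by (intro mult_nonpos_nonpos) simp_all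
      ultimately show ?thesis using Du[OF r] by linarith
    qed
  qed
  have qsP: "qs \<in> P" and xqs: "fst qs > fst p0" using qs(1) unfolding Q_def by auto
  have "vl b qs - vl b p0 = 0" using Dr[of qs b] xqs qs(2) by simp
  hence m2: "minz b qs" using m1 qsP unfolding minz_def by simp
  have "qs \<noteq> p0" using xqs by auto
  hence "b \<in> Br" unfolding Br_def using m1 m2 by blast
  thus ?thesis using bu m1 by blast
qed

end


context mthd begin

lemma step_low2:
  assumes eq: "w * of_nat (l ^ t) + of_nat J = u * of_nat (l ^ i) + of_nat j" and hu: "htle u i"
  shows "htle w t"
proof -
  obtain k where k: "u * of_nat (d * l ^ i) = of_int k" using hu unfolding htle_def by blast
  have "w * of_nat (d * l ^ t) = (w * of_nat (l ^ t)) * of_nat d" by (simp add: algebra_simps)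
  also have "w * of_nat (l ^ t) = u * of_nat (l ^ i) + of_nat j - of_nat J" using eq by simp
  also have "(u * of_nat (l ^ i) + of_nat j - of_nat J) * of_nat d =
      u * of_nat (d * l ^ i) + (of_nat j - of_nat J) * of_nat d" by (simp add: algebra_simps)
  also have "\<dots> = of_int (k + (int j - int J) * int d)" using k by simp
  finally show ?thesis unfolding htle_def by blast
qed

lemma eps_some:
  assumes "w \<in> V" "w > b"
  shows "\<exists>z. eps l n a b = Some (z - b) \<and> z \<in> V \<and> z > b \<and> z \<le> w"
proof -
  define S where "S = {x \<in> V. x > b}"
  have "S \<subseteq> V" "S \<noteq> {}" unfolding S_def using assms by auto
  then obtain z where z: "z \<in> S" "\<forall>y\<in>S. z \<le> y" using V_wo by blast
  have L: "(LEAST x. x \<in> V \<and> x > b) = z"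
    by (rule Least_equality) (use z in \<open>auto simp: S_def\<close>)
  have "\<exists>x\<in>V. x > b" using assms by blast
  hence "eps l n a b = Some (z - b)" unfolding eps_def L by simp
  moreover have "z \<le> w" using z(2) assms unfolding S_def by blast
  ultimately show ?thesis using z(1) unfolding S_def by blast
qed

lemma eps_pos: "eps l n a b = Some e \<Longrightarrow> e > 0"
proof -
  assume e: "eps l n a b = Some e"
  hence "\<exists>x\<in>V. x > b" unfolding eps_def by (simp split: if_splits)
  then obtain w where "w \<in> V" "w > b" by blast
  from eps_some[OF this] obtain z where "eps l n a b = Some (z - b)" "z > b" by blast
  thus ?thesis using e by simp
qed

definition EE where "EE = {e. \<exists>\<mu>\<in>slopes l n a. eps l n a (-\<mu>) = Some e}"

lemma tau_eq: "tau l n a d = Min ({1 / of_nat (d * l ^ n)} \<union> EE)"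
  unfolding tau_def EE_def by simp

lemma finEE: "finite EE"
proof -
  have "EE \<subseteq> (\<lambda>\<mu>. the (eps l n a (-\<mu>))) ` slopes l n a"
  proof
    fix e assume "e \<in> EE"
    then obtain \<mu> where "\<mu> \<in> slopes l n a" "eps l n a (-\<mu>) = Some e" unfolding EE_def by blast
    thus "e \<in> (\<lambda>\<mu>. the (eps l n a (-\<mu>))) ` slopes l n a" by (intro image_eqI[where x=\<mu>]) simp_all
  qed
  thus ?thesis using fin_slopes finite_subset by blast
qed

lemma finTT: "finite ({1 / of_nat (d * l ^ n)} \<union> EE)"
  using finEE by (intro finite_UnI) (rule finite.insertI[OF finite.emptyI])

lemma tau_le1: "tau l n a d \<le> 1 / of_nat (d * l ^ n)"
  unfolding tau_eq using finTT by (rule Min_le) blast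

lemma tau_le_EE: "e \<in> EE \<Longrightarrow> tau l n a d \<le> e"
  unfolding tau_eq using finTT by (rule Min_le) blast

lemma tau_pos: "tau l n a d > 0"
proof -
  have mem: "tau l n a d \<in> {1 / of_nat (d * l ^ n)} \<union> EE"
    unfolding tau_eq using finTT by (rule Min_in) blast
  show ?thesis
  proof (cases "tau l n a d \<in> EE")
    case True
    then obtain \<mu> where "eps l n a (-\<mu>) = Some (tau l n a d)" unfolding EE_def by blast
    thus ?thesis by (rule eps_pos)
  next
    case False
    hence "tau l n a d = 1 / of_nat (d * l ^ n)" using mem by blast
    moreover have "(0::rat) < 1 / of_nat (d * l ^ n)"
      using dl_pos[of n] by (simp only: zero_less_divide_1_iff)
    ultimately show ?thesis by simp
  qed
qed

lemma gap: assumes "b \<in> Br" "w \<in> V" "w > b" shows "tau l n a d \<le> w - b"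
proof -
  obtain z where z: "eps l n a b = Some (z - b)" "z \<le> w" using eps_some[OF assms(2,3)] by blast
  have "- b \<in> slopes l n a" using Br_imp_slopes[of "-b"] assms(1) by simp
  moreover have "eps l n a (-(-b)) = Some (z - b)" using z(1) by simp
  ultimately have "z - b \<in> EE" unfolding EE_def by blast
  hence "tau l n a d \<le> z - b" by (rule tau_le_EE)
  thus ?thesis using z(2) by simp
qed

lemma tau_le_pow: "t \<le> n \<Longrightarrow> tau l n a d \<le> 1 / of_nat (l ^ t)"
proof -
  assume "t \<le> n"
  have "l ^ t \<le> l ^ n" using \<open>t \<le> n\<close> l_pos by (simp add: power_increasing)
  also have "\<dots> \<le> d * l ^ n" using d1 by simp
  finally have "(of_nat (l ^ t) :: rat) \<le> of_nat (d * l ^ n)" by (simp only: of_nat_le_iff)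
  moreover have "(of_nat (l ^ t) :: rat) > 0" using l_pos by simp
  ultimately have "inverse (of_nat (d * l ^ n)) \<le> (inverse (of_nat (l ^ t)) :: rat)"
    by (intro le_imp_inverse_le)
  thus ?thesis using tau_le1 by (simp add: inverse_eq_divide)
qed

lemma g_V: "u \<in> V \<Longrightarrow> p \<in> P \<Longrightarrow> g p u \<in> V"
proof -
  assume "u \<in> V" "p \<in> P"
  then obtain k where "u \<in> Vseq l n a k" unfolding V_iff by blast
  hence "g p u \<in> Vseq l n a (Suc k)" unfolding Vseq_Suc using \<open>p \<in> P\<close> by blast
  thus ?thesis by (rule Vseq_V)
qed

end


context mthd begin

abbreviation "ht \<equiv> hgt d l"
abbreviation "T \<equiv> tau l n a d"

lemma ht_of_V: "v \<in> V \<Longrightarrow> htle v (ht v)"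
  using V_Zdl hgt_htle by blast

lemma low_bound:
  assumes u: "u \<in> V" and p: "p \<in> P"
  shows "ht u \<le> ht (g p u) + n"
proof (rule ccontr)
  define w where "w = g p u"
  assume "\<not> ht u \<le> ht (g p u) + n"
  hence lt: "ht w + n < ht u" unfolding w_def by simp
  obtain i where i: "i \<le> n" "fst p = l ^ i" using P_x[OF p] by blast
  obtain t J where tJ: "t \<le> n" "w * of_nat (l ^ t) + of_nat J = u * of_nat (fst p) + of_nat (snd p)"
    using step_eq[OF p] unfolding w_def by blast
  define H where "H = ht u"
  have eq: "w * of_nat (l ^ t) + of_nat J = u * of_nat (l ^ i) + of_nat (snd p)" using tJ i by simp
  have wV: "w \<in> V" unfolding w_def using g_V u p by blast
  have iH: "i < H" using lt i unfolding H_def by simp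
  have "ht w \<le> t + H - 1 - i" using lt i unfolding H_def by simp
  hence "htle w (t + H - 1 - i)" using htle_ht_mono[OF ht_of_V[OF wV]] by blast
  hence "htle u (H - 1)" using K[OF eq iH] by blast
  hence "ht u \<le> H - 1" by (rule hgt_le)
  thus False using iH unfolding H_def by simp
qed

lemma step_main:
  assumes u: "u \<in> V" and p: "p \<in> P" and uw: "u < g p u"
  shows "T \<le> g p u - u \<or> ht (g p u) \<ge> ht u + 1"
proof -
  define w where "w = g p u"
  have uw': "u < w" using uw unfolding w_def .
  have wV: "w \<in> V" unfolding w_def using g_V u p by blast
  obtain i where i: "i \<le> n" "fst p = l ^ i" using P_x[OF p] by blast
  show ?thesis
  proof (cases "\<exists>b\<in>Br. u < b \<and> b < w")
    case True
    then obtain b where b: "b \<in> Br" "u < b" "b < w" by blast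
    have "T \<le> w - b" using gap[OF b(1) wV b(3)] .
    thus ?thesis using b unfolding w_def by simp
  next
    case False
    then obtain ps where ps: "minz w ps" "minz u ps" using L1[OF uw'] by blast
    have psP: "ps \<in> P" using ps(1) unfolding minz_def by blast
    obtain t where t: "t \<le> n" "fst ps = l ^ t" using P_x[OF psP] by blast
    define X where "X = fst ps"
    define J where "J = snd ps"
    define x where "x = fst p"
    define j where "j = snd p"
    have Xpos: "(of_nat X :: rat) > 0" unfolding X_def using P_x_ge1[OF psP] by simp
    have "vl w ps = vl u p" using minz_F[OF ps(1)] F_g unfolding w_def by simp
    hence eq: "w * of_nat X + of_nat J = u * of_nat x + of_nat j"
      unfolding vl_def X_def J_def x_def j_def by simp
    have "F u < F w" using F_strict uw' by blast
    hence Dpos: "vl u p - vl u ps > 0" using minz_F[OF ps(2)] F_g unfolding w_def by simp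
    have wuX: "(w - u) * of_nat X = vl u p - vl u ps"
      using eq unfolding vl_def X_def J_def x_def j_def by (simp add: algebra_simps)
    consider "x = X" | "x > X" | "x < X" by arith
    thus ?thesis
    proof cases
      case 1
      have "vl u p - vl u ps = of_nat j - of_nat J"
        unfolding vl_def j_def J_def using 1 unfolding x_def X_def by simp
      hence "(of_nat j - of_nat J :: rat) > 0" using Dpos by simp
      hence "j > J" by simp
      hence "Suc J \<le> j" by simp
      hence "(of_nat (Suc J) :: rat) \<le> of_nat j" by (simp only: of_nat_le_iff)
      hence "(of_nat j - of_nat J :: rat) \<ge> 1" by simp
      hence "(w - u) * of_nat X \<ge> 1" using wuX \<open>vl u p - vl u ps = _\<close> by simp
      hence "w - u \<ge> 1 / of_nat X" using Xpos by (simp add: pos_divide_le_eq)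
      moreover have "T \<le> 1 / of_nat X" unfolding X_def t(2) using tau_le_pow[OF t(1)] .
      ultimately show ?thesis unfolding w_def by simp
    next
      case 2
      obtain b where b: "b \<in> Br" "b \<le> u" "minz b ps"
        using L2[OF ps(2) p] 2 unfolding x_def X_def by blast
      have bV: "b \<in> V" using b(1) Vseq0 Vseq_V by blast
      define Db where "Db = vl b p - vl b ps"
      have Db0: "Db \<ge> 0" using b(3) p unfolding minz_def Db_def by auto
      have DuDb: "vl u p - vl u ps = Db + (u - b) * (of_nat x - of_nat X)"
        unfolding Db_def x_def X_def by (rule Dlin)
      have xX: "(of_nat x - of_nat X :: rat) > 0" using 2 by simp
      show ?thesis
      proof (cases "Db > 0")
        case True
        define w' where "w' = g p b"
        have "F b < F w'" unfolding w'_def F_g using minz_F[OF b(3)] True unfolding Db_def by simp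
        hence bw': "b < w'" using F_mono_iff by (meson not_le less_le)
        have w'V: "w' \<in> V" unfolding w'_def using g_V[OF bV p] .
        have g1: "T \<le> w' - b" using gap[OF b(1) w'V bw'] .
        have w'w: "w' \<le> w" unfolding w'_def w_def using g_mono[OF p b(2)] .
        have "minz w' ps" using minz_interval[OF b(3) ps(1)] bw' w'w by simp
        hence "vl w' ps = vl b p" using minz_F F_g unfolding w'_def by metis
        hence w'bX: "(w' - b) * of_nat X = Db"
          unfolding Db_def vl_def X_def by (simp add: algebra_simps)
        have "(u - b) * (of_nat x - of_nat X) \<ge> 0" using b(2) xX by simp
        hence "(w' - b) * of_nat X \<le> (w - u) * of_nat X" using wuX DuDb w'bX by simp
        hence "w' - b \<le> w - u" using Xpos by simp
        thus ?thesis using g1 unfolding w_def by simp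
      next
        case False
        hence Db00: "Db = 0" using Db0 by simp
        hence "(u - b) * (of_nat x - of_nat X) > 0" using DuDb Dpos by simp
        hence ub: "u > b" using xX by (simp add: zero_less_mult_iff)
        have g1: "T \<le> u - b" using gap[OF b(1) u ub] .
        have "l ^ t < l ^ i" using 2 t(2) i(2) unfolding x_def X_def by simp
        hence "t < i" using l_gt1 by (simp add: power_strict_increasing_iff)
        hence "Suc t \<le> i" by simp
        hence "l ^ Suc t \<le> l ^ i" by (rule power_increasing) (use l_pos in simp)
        moreover have "2 * l ^ t \<le> l ^ Suc t" using l2 by simp
        ultimately have "l ^ i \<ge> 2 * l ^ t" by linarith
        hence "x \<ge> 2 * X" unfolding x_def X_def using t(2) i(2) by simp
        hence "(of_nat x - of_nat X :: rat) \<ge> of_nat X" by simp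
        hence "(u - b) * (of_nat x - of_nat X) \<ge> (u - b) * of_nat X"
          using ub by (intro mult_left_mono) simp_all
        hence "(w - u) * of_nat X \<ge> (u - b) * of_nat X" using wuX DuDb Db00 by simp
        hence "w - u \<ge> u - b" using Xpos by simp
        thus ?thesis using g1 unfolding w_def by simp
      qed
    next
      case 3
      have "l ^ i < l ^ t" using 3 t(2) i(2) unfolding x_def X_def by simp
      hence it: "i < t" using l_gt1 by (simp add: power_strict_increasing_iff)
      have eq2: "w * of_nat (l ^ t) + of_nat J = u * of_nat (l ^ i) + of_nat j"
        using eq t(2) i(2) unfolding X_def x_def by simp
      show ?thesis
      proof (cases "ht u > i")
        case True
        define H where "H = ht u"
        have "ht u + 1 \<le> ht w"
        proof (rule ccontr)
          assume "\<not> ht u + 1 \<le> ht w"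
          hence "ht w \<le> t + H - 1 - i" using it True unfolding H_def by simp
          hence "htle w (t + H - 1 - i)" using htle_ht_mono[OF ht_of_V[OF wV]] by blast
          hence "htle u (H - 1)" using K[OF eq2] True unfolding H_def by blast
          hence "ht u \<le> H - 1" by (rule hgt_le)
          thus False using True unfolding H_def by simp
        qed
        thus ?thesis unfolding w_def by simp
      next
        case False
        hence "htle u i" using htle_ht_mono[OF ht_of_V[OF u]] by simp
        hence hwt: "htle w t" using step_low2[OF eq2] by blast
        have "htle w n" using htle_mono[OF hwt t(1)] .
        moreover have "htle u n" using htle_mono[OF \<open>htle u i\<close> i(1)] .
        ultimately have "w - u \<ge> 1 / of_nat (d * l ^ n)" using H1 uw' by blast
        thus ?thesis using tau_le1 unfolding w_def by simp
      qed
    qed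
  qed
qed

end


context mthd begin

abbreviation "MM \<equiv> Max (slopes l n a)"

definition Phi :: "rat \<Rightarrow> rat" where
  "Phi v = (of_nat n + 1) * (v + MM) / T + of_nat (ht v)"

lemma V_ge: "v \<in> V \<Longrightarrow> v \<ge> - MM"
proof -
  have "\<forall>v\<in>Vseq l n a k. v \<ge> - MM" for k
  proof (induction k)
    case 0
    show ?case
    proof
      fix v assume "v \<in> Vseq l n a 0"
      hence "- v \<in> slopes l n a" unfolding Vseq0 using Br_imp_slopes[of "-v"] by simp
      hence "- v \<le> MM" using fin_slopes by simp
      thus "v \<ge> - MM" by simp
    qed
  next
    case (Suc k)
    show ?case
    proof
      fix w assume "w \<in> Vseq l n a (Suc k)"
      then obtain u p where up: "u \<in> Vseq l n a k" "p \<in> P" "w = g p u" unfolding Vseq_Suc by blast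
      have "u \<le> w" using g_ge[OF up(2)] up(3) by simp
      thus "w \<ge> - MM" using Suc up(1) by fastforce
    qed
  qed
  thus "v \<in> V \<Longrightarrow> v \<ge> - MM" unfolding V_iff by blast
qed

lemma Phi_alt: "Phi v = ((of_nat n + 1) / T) * (v + MM) + of_nat (ht v)"
  unfolding Phi_def by simp

lemma Phi_nonneg: "v \<in> V \<Longrightarrow> Phi v \<ge> 0"
proof -
  assume "v \<in> V"
  hence "v + MM \<ge> 0" using V_ge by fastforce
  moreover have "(of_nat n + 1) / T > 0" using tau_pos by simp
  ultimately have "((of_nat n + 1) / T) * (v + MM) \<ge> 0" by (intro mult_nonneg_nonneg) simp_all
  moreover have "(of_nat (ht v) :: rat) \<ge> 0" by simp
  ultimately show ?thesis unfolding Phi_alt by linarith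
qed

lemma Phi_step:
  assumes u: "u \<in> V" and p: "p \<in> P" and uw: "u < g p u"
  shows "Phi (g p u) \<ge> Phi u + 1"
proof -
  define w where "w = g p u"
  define A where "A = (of_nat n + 1) / T"
  have Apos: "A > 0" unfolding A_def using tau_pos by simp
  have e1: "A * (w + MM) - A * (u + MM) = A * (w - u)" by (simp add: algebra_simps)
  have diff: "Phi w - Phi u = A * (w - u) + (of_nat (ht w) - of_nat (ht u))"
    unfolding Phi_alt A_def[symmetric] using e1 by linarith
  have lb: "ht u \<le> ht w + n" unfolding w_def using low_bound[OF u p] .
  have wu: "w - u > 0" using uw unfolding w_def by simp
  from step_main[OF u p uw] have "T \<le> w - u \<or> ht w \<ge> ht u + 1" unfolding w_def .
  thus ?thesis
  proof
    assume Tle: "T \<le> w - u"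
    have "A * T = of_nat n + 1" unfolding A_def using tau_pos by simp
    moreover have "A * T \<le> A * (w - u)" using Tle Apos by simp
    moreover have "(of_nat (ht u) :: rat) \<le> of_nat (ht w) + of_nat n"
      using lb by (simp only: of_nat_add[symmetric] of_nat_le_iff)
    ultimately have "Phi w - Phi u \<ge> 1" using diff by linarith
    thus ?thesis unfolding w_def by simp
  next
    assume "ht w \<ge> ht u + 1"
    hence "(of_nat (ht u) :: rat) + 1 \<le> of_nat (ht w)"
      by (simp only: of_nat_Suc[symmetric] of_nat_le_iff Suc_eq_plus1)
    moreover have "A * (w - u) > 0" using Apos wu by simp
    ultimately have "Phi w - Phi u \<ge> 1" using diff by linarith
    thus ?thesis unfolding w_def by simp
  qed
qed

lemma main_ind: "\<forall>v\<in>Vseq l n a k. \<exists>m. v \<in> Vseq l n a m \<and> of_nat m \<le> Phi v"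
proof (induction k)
  case 0
  show ?case
  proof
    fix v assume v: "v \<in> Vseq l n a 0"
    have "Phi v \<ge> 0" using Phi_nonneg Vseq_V[OF v] by blast
    thus "\<exists>m. v \<in> Vseq l n a m \<and> of_nat m \<le> Phi v" using v by (intro exI[of _ 0]) simp
  qed
next
  case (Suc k)
  show ?case
  proof
    fix w assume "w \<in> Vseq l n a (Suc k)"
    then obtain u p where up: "u \<in> Vseq l n a k" "p \<in> P" "w = g p u" unfolding Vseq_Suc by blast
    obtain m where m: "u \<in> Vseq l n a m" "of_nat m \<le> Phi u" using Suc up(1) by blast
    have uV: "u \<in> V" using Vseq_V[OF up(1)] .
    show "\<exists>m. w \<in> Vseq l n a m \<and> of_nat m \<le> Phi w"
    proof (cases "u < w")
      case True
      have "Phi w \<ge> Phi u + 1" using Phi_step[OF uV up(2)] True up(3) by simp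
      hence "of_nat (Suc m) \<le> Phi w" using m(2) by simp
      moreover have "w \<in> Vseq l n a (Suc m)" unfolding Vseq_Suc using m(1) up(2,3) by blast
      ultimately show ?thesis by blast
    next
      case False
      moreover have "u \<le> w" using g_ge[OF up(2), of u] up(3) by simp
      ultimately have "w = u" by simp
      thus ?thesis using m by blast
    qed
  qed
qed

lemma iota_eq: "iota l n a d v = nat \<lfloor>Phi v\<rfloor>"
  unfolding iota_def Phi_def by simp

end



theorem mainTheorem11:
  fixes a :: "nat \<Rightarrow> 'a::field poly" and l n d :: nat and v :: rat
  assumes "l \<ge> 2" and "n \<ge> 1" and "a 0 \<noteq> 0" and "a n \<noteq> 0"
    and "d \<ge> 1" and "\<forall>\<mu>\<in>slopes l n a. \<exists>k::int. of_nat d * \<mu> = of_int k"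
  shows "v \<in> Vall l n a \<longleftrightarrow>
           (v \<in> Zdl d l \<and> v \<ge> - Max (slopes l n a) \<and> v \<in> Vseq l n a (iota l n a d v))"
proof -
  interpret mthd a l n d
    by unfold_locales (use assms in auto)
  show ?thesis
  proof
    assume v: "v \<in> Vall l n a"
    have z: "v \<in> Zdl d l" unfolding Zdl_iff using V_Zdl[OF v] .
    have ge: "v \<ge> - Max (slopes l n a)" using V_ge[OF v] .
    obtain k where "v \<in> Vseq l n a k" using v unfolding V_iff by blast
    then obtain m where m: "v \<in> Vseq l n a m" "of_nat m \<le> Phi v" using main_ind by blast
    have "int m \<le> \<lfloor>Phi v\<rfloor>" using m(2) by (simp add: le_floor_iff)
    hence "m \<le> iota l n a d v" unfolding iota_eq by linarith
    hence "v \<in> Vseq l n a (iota l n a d v)" using Vseq_mono m(1) by blast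
    thus "v \<in> Zdl d l \<and> v \<ge> - Max (slopes l n a) \<and> v \<in> Vseq l n a (iota l n a d v)"
      using z ge by blast
  next
    assume "v \<in> Zdl d l \<and> v \<ge> - Max (slopes l n a) \<and> v \<in> Vseq l n a (iota l n a d v)"
    thus "v \<in> Vall l n a" using Vseq_V by blast
  qed
qed


end
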